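(* For $n\ge2$ and all $P,Q\in\Gamma_n$, $D_{hI}(P\|Q)\le \frac12 D_{TJ}(P\|Q)$.
   Context: $\Gamma_n=\{P=(p_1,\dots,p_n): p_i>0,\ \sum p_i=1\}$. $h(P\|Q)=\frac12\sum_{i=1}^n(\sqrt{p_i}-\sqrt{q_i})^2$; $I(P\|Q)=\frac12\Big[\sum_{i=1}^n p_i\ln\frac{2p_i}{p_i+q_i}+\sum_{i=1}^n q_i\ln\frac{2q_i}{p_i+q_i}\Big]$; $J(P\|Q)=\sum_{i=1}^n(p_i-q_i)\ln\frac{p_i}{q_i}$; $T(P\|Q)=\sum_{i=1}^n\frac{p_i+q_i}{2}\ln\frac{p_i+q_i}{2\sqrt{p_iq_i}}$. $D_{hI}=h-I$, $D_{TJ}=T-\frac18J$. *)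

theory Defs
  imports Complex_Main
begin

definition Gamma :: "nat \<Rightarrow> (nat \<Rightarrow> real) set" where
  "Gamma n = {p. (\<forall>i<n. p i > 0) \<and> (\<Sum>i<n. p i) = 1}"

definition hell :: "nat \<Rightarrow> (nat \<Rightarrow> real) \<Rightarrow> (nat \<Rightarrow> real) \<Rightarrow> real" where
  "hell n p q = 1/2 * (\<Sum>i<n. (sqrt (p i) - sqrt (q i))^2)"

definition jsI :: "nat \<Rightarrow> (nat \<Rightarrow> real) \<Rightarrow> (nat \<Rightarrow> real) \<Rightarrow> real" where
  "jsI n p q = 1/2 * ((\<Sum>i<n. p i * ln (2 * p i / (p i + q i)))
                    + (\<Sum>i<n. q i * ln (2 * q i / (p i + q i))))"

definition jJ :: "nat \<Rightarrow> (nat \<Rightarrow> real) \<Rightarrow> (nat \<Rightarrow> real) \<Rightarrow> real" where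
  "jJ n p q = (\<Sum>i<n. (p i - q i) * ln (p i / q i))"

definition amgT :: "nat \<Rightarrow> (nat \<Rightarrow> real) \<Rightarrow> (nat \<Rightarrow> real) \<Rightarrow> real" where
  "amgT n p q = (\<Sum>i<n. (p i + q i) / 2 * ln ((p i + q i) / (2 * sqrt (p i * q i))))"

definition D_hI :: "nat \<Rightarrow> (nat \<Rightarrow> real) \<Rightarrow> (nat \<Rightarrow> real) \<Rightarrow> real" where
  "D_hI n p q = hell n p q - jsI n p q"

definition D_TJ :: "nat \<Rightarrow> (nat \<Rightarrow> real) \<Rightarrow> (nat \<Rightarrow> real) \<Rightarrow> real" where
  "D_TJ n p q = amgT n p q - 1/8 * jJ n p q"

end

theory Submission
  imports Defs
begin

definition KK :: "real \<Rightarrow> real" where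
 "KK t = 5/4 * ln t - 1/(8*t^2) - 1/2 * ln ((t^2+1)/2) - 7/8 + 1/t"
definition GG :: "real \<Rightarrow> real" where
 "GG t = (5*t^2-1)/8 * ln t - (t^2+1)/4 * ln ((t^2+1)/2) - (t-1)^2/2"
lemma KK_deriv: "t > 0 \<Longrightarrow> (KK has_real_derivative ((t-1)^4/(4*t^3*(t^2+1)))) (at t)"
proof -
  assume t: "t > 0"
  have p: "t^2 + 1 > 0" by (smt (verit) zero_le_power2)
  have e: "5 / (4 * t) + t / (4 * t ^ 4) - 4 * t / (t\<^sup>2 * 4 + 4) - 1 / (t * t) =
    (t - 1) ^ 4 / (4 * t ^ 3 * (t\<^sup>2 + 1))"
    proof -
    have n1: "t \<noteq> 0" "t^2+1 \<noteq> 0" "t\<^sup>2 * 4 + 4 \<noteq> 0" using t p by auto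
    show ?thesis using n1 by (simp add: divide_simps) (simp add: algebra_simps eval_nat_numeral)
  qed
  show ?thesis unfolding KK_def using t p e
    by (auto intro!: derivative_eq_intros)
qed
lemma GG_deriv: "t > 0 \<Longrightarrow> (GG has_real_derivative (t * KK t)) (at t)"
proof -
  assume t: "t > 0"
  have p: "t^2 + 1 > 0" by (smt (verit) zero_le_power2)
  have e: "(80 * (t * ln t) + (40 * t\<^sup>2 - 8) / t) / 64 -
       (8 * (t * ln ((t\<^sup>2 + 1) / 2)) + 8 * t) / 16 -
       (4 * t - 4) / 4 =
       t * KK t"
    using t p unfolding KK_def by (simp add: field_simps) (simp add: algebra_simps power2_eq_square eval_nat_numeral)
  show ?thesis unfolding GG_def using t p e
    by (auto intro!: derivative_eq_intros)
qed
lemma term_sr: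
  fixes s r :: real assumes s: "s > 0" and r: "r > 0" and G: "GG (s/r) \<ge> 0"
  shows "1/2 * (s - r)^2 - 1/2 * (s^2 * ln (2*s^2/(s^2+r^2)) + r^2 * ln (2*r^2/(s^2+r^2)))
     \<le> 1/2 * ((s^2+r^2)/2 * ln ((s^2+r^2)/(2*sqrt(s^2*r^2))) - 1/8 * ((s^2-r^2) * ln (s^2/r^2)))"
proof -
  have S: "s^2+r^2 > 0" using s r by (simp add: add_pos_pos)
  have l1: "ln (2*s^2/(s^2+r^2)) = ln 2 + 2*ln s - ln (s^2+r^2)"
    using s S by (simp add: ln_div ln_mult ln_realpow)
  have l2: "ln (2*r^2/(s^2+r^2)) = ln 2 + 2*ln r - ln (s^2+r^2)"
    using r S by (simp add: ln_div ln_mult ln_realpow)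
  have sq: "sqrt(s^2*r^2) = s*r" using s r by (simp add: real_sqrt_mult)
  have l3: "ln ((s^2+r^2)/(2*sqrt(s^2*r^2))) = ln (s^2+r^2) - ln 2 - ln s - ln r"
    unfolding sq using s r S by (simp add: ln_div ln_mult)
  have l4: "ln (s^2/r^2) = 2*ln s - 2*ln r" using s r by (simp add: ln_div ln_realpow)
  have l5: "ln (s/r) = ln s - ln r" using s r by (simp add: ln_div)
  have e6: "((s/r)^2+1)/2 = (s^2+r^2)/(2*r^2)" using r by (simp add: field_simps power2_eq_square)
  have l6: "ln (((s/r)^2+1)/2) = ln (s^2+r^2) - ln 2 - 2*ln r"
    unfolding e6 using r S by (simp add: ln_div ln_mult ln_realpow)
  have key: "r^2 * GG (s/r) = 1/2 * ((s^2+r^2)/2 * ln ((s^2+r^2)/(2*sqrt(s^2*r^2))) - 1/8 * ((s^2-r^2) * ln (s^2/r^2)))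
     - (1/2 * (s - r)^2 - 1/2 * (s^2 * ln (2*s^2/(s^2+r^2)) + r^2 * ln (2*r^2/(s^2+r^2))))"
    unfolding GG_def l1 l2 l3 l4 l5 l6 using r
    by (simp add: field_simps power2_eq_square)
  have "0 \<le> r^2 * GG (s/r)" using G by simp
  then show ?thesis unfolding key by simp
qed
lemma KK1: "KK 1 = 0" by (simp add: KK_def)
lemma GG1: "GG 1 = 0" by (simp add: GG_def)

lemma KK_le: "0 < x \<Longrightarrow> x \<le> 1 \<Longrightarrow> KK x \<le> 0"
proof -
  assume x: "0 < x" "x \<le> 1"
  have "KK x \<le> KK 1"
  proof (rule DERIV_nonneg_imp_nondecreasing[of x 1 KK])
    fix y assume "x \<le> y" "y \<le> 1"
    then have y: "y > 0" using x by simp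
    show "\<exists>d. (KK has_real_derivative d) (at y) \<and> 0 \<le> d"
      using KK_deriv[OF y] y by (intro exI[of _ "(y-1)^4/(4*y^3*(y^2+1))"]) (simp add: add_pos_nonneg)
  qed (use x in simp)
  then show ?thesis using KK1 by simp
qed

lemma KK_ge: "1 \<le> x \<Longrightarrow> 0 \<le> KK x"
proof -
  assume x: "1 \<le> x"
  have "KK 1 \<le> KK x"
  proof (rule DERIV_nonneg_imp_nondecreasing[of 1 x KK])
    fix y assume "1 \<le> y" "y \<le> x"
    then have y: "y > 0" by simp
    show "\<exists>d. (KK has_real_derivative d) (at y) \<and> 0 \<le> d"
      using KK_deriv[OF y] y by (intro exI[of _ "(y-1)^4/(4*y^3*(y^2+1))"]) (simp add: add_pos_nonneg)
  qed (use x in simp)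
  then show ?thesis using KK1 by simp
qed

lemma GG_nonneg: "0 < t \<Longrightarrow> 0 \<le> GG t"
proof (cases "t \<le> 1")
  case True
  assume t: "0 < t"
  have "GG 1 \<le> GG t"
  proof (rule DERIV_nonpos_imp_nonincreasing[of t 1 GG])
    fix y assume "t \<le> y" "y \<le> 1"
    then have y: "y > 0" "y \<le> 1" using t by simp_all
    show "\<exists>d. (GG has_real_derivative d) (at y) \<and> d \<le> 0"
      using GG_deriv[OF y(1)] KK_le[OF y] y by (intro exI[of _ "y * KK y"]) (simp add: mult_nonneg_nonpos)
  qed (use True in simp)
  then show ?thesis using GG1 by simp
next
  case False
  have "GG 1 \<le> GG t"
  proof (rule DERIV_nonneg_imp_nondecreasing[of 1 t GG])
    fix y assume "1 \<le> y" "y \<le> t"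
    then have y: "y > 0" "1 \<le> y" by simp_all
    show "\<exists>d. (GG has_real_derivative d) (at y) \<and> 0 \<le> d"
      using GG_deriv[OF y(1)] KK_ge[OF y(2)] y by (intro exI[of _ "y * KK y"]) simp
  qed (use False in simp)
  then show ?thesis using GG1 by simp
qed


lemma term_ab:
  fixes a b :: real assumes a: "a > 0" and b: "b > 0"
  shows "1/2 * (sqrt a - sqrt b)^2 - 1/2 * (a * ln (2*a/(a+b)) + b * ln (2*b/(a+b)))
     \<le> 1/2 * ((a+b)/2 * ln ((a+b)/(2*sqrt(a*b))) - 1/8 * ((a-b) * ln (a/b)))"
proof -
  have s: "sqrt a > 0" "sqrt b > 0" using a b by auto
  have G: "GG (sqrt a / sqrt b) \<ge> 0" using s by (intro GG_nonneg) simp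
  have ea: "sqrt a ^ 2 = a" "sqrt b ^ 2 = b" using a b by simp_all
  show ?thesis using term_sr[OF s G] unfolding ea .
qed

theorem proposition5p3:
  fixes n :: nat and p q :: "nat \<Rightarrow> real"
  assumes "n \<ge> 2" and "p \<in> Gamma n" and "q \<in> Gamma n"
  shows "D_hI n p q \<le> 1/2 * D_TJ n p q"
proof -
  have pq: "\<And>i. i < n \<Longrightarrow> p i > 0 \<and> q i > 0" using assms(2,3) by (simp add: Gamma_def)
  have L: "D_hI n p q = (\<Sum>i<n. 1/2 * (sqrt (p i) - sqrt (q i))^2 - 1/2 * (p i * ln (2*p i/(p i+q i)) + q i * ln (2*q i/(p i+q i))))"
    unfolding D_hI_def hell_def jsI_def
    by (simp add: sum_subtractf sum.distrib sum_distrib_left algebra_simps)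
  have R: "1/2 * D_TJ n p q = (\<Sum>i<n. 1/2 * ((p i+q i)/2 * ln ((p i+q i)/(2*sqrt(p i*q i))) - 1/8 * ((p i-q i) * ln (p i/q i))))"
    unfolding D_TJ_def amgT_def jJ_def
    by (simp add: sum_subtractf sum.distrib sum_distrib_left algebra_simps)
  show ?thesis unfolding L R
    by (rule sum_mono) (use pq term_ab in auto)
qed

end
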